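(* Assume hypothesis (A). Then for every $\gamma=(\gamma_1,\dots,\gamma_d)\in\Gamma$, the function $h_\gamma:\mathbb{Z}_+^d\to\mathbb{R}_+$ defined by $$h_\gamma(x)=\sum_{i=1}^d \exp(\overrightarrow{\gamma_i}\cdot x),\qquad x\in\mathbb{Z}_+^d,$$ satisfies $$\limsup_{|x|\to\infty}\frac{\mathcal{L}h_\gamma(x)}{h_\gamma(x)}=-\min_{1\le i\le d}\frac{\gamma_i}{G_{ii}}\Bigl(\frac{\mu_i}{1+\gamma_i}-\nu_i\Bigr).$$
   Context: Jackson network with $d$ queues: arrival rates $\lambda_1,\dots,\lambda_d\ge 0$, service rates $\mu_1,\dots,\mu_d>0$, routing matrix $P=(p_{ij})_{i,j=1}^d$ with nonnegative entries, $p_{ii}=0$, $\sum_j p_{ij}\le 1$, and $p_{i0}=1-\sum_{j=1}^d p_{ij}$. Let $\epsilon^i$ be the $i$-th unit vector of $\mathbb{Z}^d$ and let $q:\mathbb{Z}^d\to\mathbb{R}_+$ be given by $q(\epsilon^i)=\lambda_i$, $q(-\epsilon^i)=\mu_ip_{i0}$, $q(\epsilon^j-\epsilon^i)=\mu_ip_{ij}$ ($i,j\in\{1,\dots,d\}$), and $q(y)=0$ otherwise. The queue-length process $(Z(t))$ is the continuous-time Markov process on $\mathbb{Z}_+^d$ with generator $\mathcal{L}f(y)=\sum_{z\in\mathbb{Z}_+^d}q(z-y)(f(z)-f(y))$, $y\in\mathbb{Z}_+^d$. Hypothesis (A): the matrix $(q(x-y))_{x,y\in\mathbb{Z}^d}$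 is irreducible; equivalently (A1) the spectral radius of $P$ is $<1$ (every customer eventually leaves) and (A2) for every $i$ there are $n\in\mathbb{N}$ and $j$ with $\lambda_jp^{(n)}_{ji}>0$ ($p^{(n)}$ the $n$-step transition probabilities of $P$). Under (A) the traffic equations $\nu_j=\lambda_j+\sum_{i=1}^d\nu_ip_{ij}$, $j=1,\dots,d$, have a unique solution, with all $\nu_i>0$. Let $G=(I-P)^{-1}=\sum_{n\ge0}P^n$. Let $(\xi_n)$ be the Markov chain on $\{0,1,\dots,d\}$ with transition probabilities $p_{ij}$ from $i\in\{1,\dots,d\}$ to $j\in\{0,\dots,d\}$ and $0$ absorbing; for $j\ge1$ let $\tau_j=\inf\{n\ge0:\xi_n=j\}$ ($\inf\emptyset=+\infty$) and $Q_{ij}=\mathbb{P}_i(\tau_j<\infty)$ (so $Q_{ii}=1$). For $\gamma\in\mathbb{R}_+^d$ define vectors $\overrightarrow{\gamma_i}=(\gamma_i^1,\dots,\gamma_i^d)$ by $\gamma_i^j=\log(1+Q_{ji}\gamma_i)$. $\Gamma$ is the set of $\gamma\in\mathbb{R}_+^d$ such that for every $i\in\{1,\dots,d\}$ and every nonzero $v\in\mathbb{R}_+^d$ with $v^i=0$, $\overrightarrow{\gamma_i}\cdot v<\max_{1\le j\le d}\overrightarrow{\gamma_j}\cdot v$ (usual scalar product). *)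

theory Defs
  imports "HOL-Analysis.Analysis"
begin

text \<open>Queues are indexed by a finite type 'd (d = CARD('d)). Arrival rates lam, service
rates mu, routing matrix P (P $ i $ j = p_ij). States are integer vectors int^'d.\<close>

definition unitv :: "'d::finite \<Rightarrow> int^'d" where
  "unitv i = (\<chi> k. if k = i then 1 else 0)"

definition exitp :: "real^'d^'d \<Rightarrow> 'd::finite \<Rightarrow> real" where
  "exitp P i = 1 - (\<Sum>j\<in>UNIV. P $ i $ j)"

definition jackson_params :: "real^'d \<Rightarrow> real^'d \<Rightarrow> real^'d^'d \<Rightarrow> bool" where
  "jackson_params lam mu P \<longleftrightarrow>
     (\<forall>i. 0 \<le> lam $ i) \<and> (\<forall>i. 0 < mu $ i) \<and>
     (\<forall>i j. 0 \<le> P $ i $ j) \<and> (\<forall>i. P $ i $ i = 0) \<and>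
     (\<forall>i. (\<Sum>j\<in>UNIV. P $ i $ j) \<le> 1)"

definition qrate :: "real^'d \<Rightarrow> real^'d \<Rightarrow> real^'d^'d \<Rightarrow> int^'d \<Rightarrow> real" where
  "qrate lam mu P v =
     (\<Sum>i\<in>UNIV. if v = unitv i then lam $ i else 0)
   + (\<Sum>i\<in>UNIV. if v = - unitv i then mu $ i * exitp P i else 0)
   + (\<Sum>i\<in>UNIV. \<Sum>j\<in>UNIV. if v = unitv j - unitv i then mu $ i * P $ i $ j else 0)"

text \<open>Hypothesis (A): the matrix (q(x-y))_{x,y in Z^d} is irreducible.\<close>
definition hypA :: "real^'d \<Rightarrow> real^'d \<Rightarrow> real^'d^'d \<Rightarrow> bool" where
  "hypA lam mu P \<longleftrightarrow>
     (\<forall>x y :: int^'d. (\<lambda>a b. 0 < qrate lam mu P (b - a))\<^sup>*\<^sup>* x y)"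

definition posorth :: "(int^'d) set" where
  "posorth = {z. \<forall>i. 0 \<le> z $ i}"

definition gen :: "real^'d \<Rightarrow> real^'d \<Rightarrow> real^'d^'d \<Rightarrow> (int^'d \<Rightarrow> real) \<Rightarrow> int^'d \<Rightarrow> real" where
  "gen lam mu P f y = infsum (\<lambda>z. qrate lam mu P (z - y) * (f z - f y)) posorth"

definition traffic :: "real^'d \<Rightarrow> real^'d^'d \<Rightarrow> real^'d" where
  "traffic lam P = (THE nu. \<forall>j. nu $ j = lam $ j + (\<Sum>i\<in>UNIV. nu $ i * P $ i $ j))"

definition Gmat :: "real^'d^'d \<Rightarrow> real^'d^'d" where
  "Gmat P = matrix_inv (mat 1 - P)"

text \<open>Taboo probabilities: probability, starting from i, that the chain (xi_n) is at j at
time n and has not visited j before time n (state 0 is absorbing, so such paths stay in 1..d).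
Thus tabp P j n i = P_i(tau_j = n).\<close>
fun tabp :: "real^'d^'d \<Rightarrow> 'd::finite \<Rightarrow> nat \<Rightarrow> 'd \<Rightarrow> real" where
  "tabp P j 0 i = (if i = j then 1 else 0)"
| "tabp P j (Suc n) i = (if i = j then 0 else (\<Sum>k\<in>UNIV. P $ i $ k * tabp P j n k))"

text \<open>Q_ij = P_i(tau_j < infinity) = sum_n P_i(tau_j = n).\<close>
definition hitQ :: "real^'d^'d \<Rightarrow> 'd::finite \<Rightarrow> 'd \<Rightarrow> real" where
  "hitQ P i j = (\<Sum>n. tabp P j n i)"

definition gvec :: "real^'d^'d \<Rightarrow> real^'d \<Rightarrow> 'd::finite \<Rightarrow> real^'d" where
  "gvec P gamma i = (\<chi> j. ln (1 + hitQ P j i * gamma $ i))"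

definition GammaSet :: "real^'d^'d \<Rightarrow> (real^'d) set" where
  "GammaSet P = {gamma. (\<forall>i. 0 \<le> gamma $ i) \<and>
     (\<forall>i. \<forall>v::real^'d. (\<forall>k. 0 \<le> v $ k) \<and> v \<noteq> 0 \<and> v $ i = 0 \<longrightarrow>
        gvec P gamma i \<bullet> v < (MAX j\<in>UNIV. gvec P gamma j \<bullet> v))}"

definition hfun :: "real^'d^'d \<Rightarrow> real^'d \<Rightarrow> int^'d \<Rightarrow> real" where
  "hfun P gamma x = (\<Sum>i\<in>UNIV. exp (\<Sum>j\<in>UNIV. gvec P gamma i $ j * real_of_int (x $ j)))"

definition at_inf_pos :: "(int^'d::finite) filter" where
  "at_inf_pos = inf (filtercomap (\<lambda>x. \<Sum>i\<in>UNIV. \<bar>x $ i\<bar>) at_top) (principal posorth)"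

end

theory Submission imports Defs begin

lemma tabp_nonneg:
  assumes "jackson_params lam mu P"
  shows "0 \<le> tabp P k n i"
proof (induction n arbitrary: i)
  case 0 then show ?case by simp
next
  case (Suc n)
  have "\<And>j. 0 \<le> P $ i $ j" using assms by (simp add: jackson_params_def)
  then show ?case using Suc by (auto intro!: sum_nonneg)
qed

lemma tabp_psum_le1:
  assumes "jackson_params lam mu P"
  shows "(\<Sum>n<N. tabp P k n i) \<le> 1"
proof (induction N arbitrary: i)
  case 0 then show ?case by simp
next
  case (Suc N)
  have eq: "(\<Sum>n<Suc N. tabp P k n i) = tabp P k 0 i + (\<Sum>n<N. tabp P k (Suc n) i)"
    by (rule sum.lessThan_Suc_shift)
  show ?case
  proof (cases "i = k")
    case True then show ?thesis unfolding eq by simp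
  next
    case False
    have "(\<Sum>n<N. tabp P k (Suc n) i) = (\<Sum>j\<in>UNIV. P$i$j * (\<Sum>n<N. tabp P k n j))"
      using False by (simp add: sum_distrib_left sum.swap[of _ "{..<N}"])
    also have "\<dots> \<le> (\<Sum>j\<in>UNIV. P$i$j * 1)"
      using assms Suc by (intro sum_mono mult_left_mono) (auto simp: jackson_params_def)
    also have "\<dots> \<le> 1" using assms by (simp add: jackson_params_def)
    finally show ?thesis unfolding eq using False by simp
  qed
qed

lemma tabp_summable:
  assumes "jackson_params lam mu P"
  shows "summable (\<lambda>n. tabp P k n i)"
  by (rule summableI_nonneg_bounded[where x=1]) (fact tabp_nonneg[OF assms], fact tabp_psum_le1[OF assms])

lemma hitQ_nonneg: "jackson_params lam mu P \<Longrightarrow> 0 \<le> hitQ P i k"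
  unfolding hitQ_def by (intro suminf_nonneg tabp_summable tabp_nonneg)

lemma hitQ_le1: "jackson_params lam mu P \<Longrightarrow> hitQ P i k \<le> 1"
  unfolding hitQ_def by (intro suminf_le_const tabp_summable tabp_psum_le1)

lemma hitQ_diag: "jackson_params lam mu P \<Longrightarrow> hitQ P k k = 1"
  unfolding hitQ_def using suminf_split_head[OF tabp_summable, of lam mu P k k] by simp

lemma hitQ_rec:
  assumes "jackson_params lam mu P" "i \<noteq> k"
  shows "hitQ P i k = (\<Sum>j\<in>UNIV. P$i$j * hitQ P j k)"
proof -
  have "hitQ P i k = (\<Sum>n. tabp P k (Suc n) i)"
    unfolding hitQ_def using suminf_split_head[OF tabp_summable[OF assms(1)], of k i] assms(2) by simp
  also have "\<dots> = (\<Sum>n. \<Sum>j\<in>UNIV. P$i$j * tabp P k n j)" using assms(2) by simp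
  also have "\<dots> = (\<Sum>j\<in>UNIV. \<Sum>n. P$i$j * tabp P k n j)"
    by (rule suminf_sum) (intro summable_mult tabp_summable[OF assms(1)])
  also have "\<dots> = (\<Sum>j\<in>UNIV. P$i$j * hitQ P j k)"
    unfolding hitQ_def by (intro sum.cong refl suminf_mult tabp_summable[OF assms(1)])
  finally show ?thesis .
qed

lemma unitv_nth: "unitv i $ k = (if k = i then 1 else 0)"
  by (simp add: unitv_def)

lemma exitp_nonneg: "jackson_params lam mu P \<Longrightarrow> 0 \<le> exitp P i"
  by (simp add: exitp_def jackson_params_def)

lemma sum_pos_ex: "0 < sum f A \<Longrightarrow> \<exists>a\<in>A. 0 < (f a :: real)"
  by (metis not_less sum_nonpos)

lemma no_trap:
  fixes lam mu :: "real^'d::finite" and P :: "real^'d^'d"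
  assumes JP: "jackson_params lam mu P" and A: "hypA lam mu P" and kS: "k \<in> S"
    and cl: "\<forall>i\<in>S. exitp P i = 0 \<and> (\<forall>j. 0 < P$i$j \<longrightarrow> j \<in> S)"
  shows False
proof -
  define phi where "phi = (\<lambda>x::int^'d. \<Sum>i\<in>S. x$i)"
  have lin: "phi b = phi a + phi (b - a)" for a b
    unfolding phi_def by (simp add: sum.distrib[symmetric])
  have step: "0 \<le> phi v" if "0 < qrate lam mu P v" for v
  proof -
    let ?A = "\<Sum>i\<in>UNIV. if v = unitv i then lam $ i else 0"
    let ?B = "\<Sum>i\<in>UNIV. if v = - unitv i then mu $ i * exitp P i else 0"
    let ?C = "\<Sum>i\<in>UNIV. \<Sum>j\<in>UNIV. if v = unitv j - unitv i then mu $ i * P $ i $ j else 0"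
    have "0 < ?A \<or> 0 < ?B \<or> 0 < ?C" using that unfolding qrate_def by linarith
    moreover
    { assume "0 < ?A"
      then obtain i where "0 < (if v = unitv i then lam $ i else 0)" by (blast dest: sum_pos_ex)
      then have "v = unitv i" by (auto split: if_splits)
      then have ?thesis unfolding phi_def by (auto simp: unitv_nth intro!: sum_nonneg) }
    moreover
    { assume "0 < ?B"
      then obtain i where "0 < (if v = - unitv i then mu $ i * exitp P i else 0)" by (blast dest: sum_pos_ex)
      then have v: "v = - unitv i" and "exitp P i \<noteq> 0" by (auto split: if_splits)
      then have "i \<notin> S" using cl by auto
      then have ?thesis unfolding phi_def v by (auto simp: unitv_nth intro!: sum_nonneg) }
    moreover
    { assume "0 < ?C"
      then obtain i where "0 < (\<Sum>j\<in>UNIV. if v = unitv j - unitv i then mu $ i * P $ i $ j else 0)"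
        by (blast dest: sum_pos_ex)
      then obtain j where "0 < (if v = unitv j - unitv i then mu $ i * P $ i $ j else 0)"
        by (blast dest: sum_pos_ex)
      then have v: "v = unitv j - unitv i" and pos: "0 < mu $ i * P $ i $ j" by (auto split: if_splits)
      have "0 < mu $ i" using JP by (simp add: jackson_params_def)
      with pos have "0 < P $ i $ j" by (simp add: zero_less_mult_iff)
      then have ij: "i \<in> S \<longrightarrow> j \<in> S" using cl by auto
      have "phi v = (\<Sum>l\<in>S. (if l = j then 1 else 0)) - (\<Sum>l\<in>S. (if l = i then 1 else 0))"
        unfolding phi_def v by (simp add: unitv_nth sum_subtractf)
      also have "\<dots> = (if j \<in> S then 1 else 0) - (if i \<in> S then 1 else 0)"
        by (simp add: sum.delta)
      finally have ?thesis using ij by auto }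
    ultimately show ?thesis by blast
  qed
  have reach: "(\<lambda>a b. 0 < qrate lam mu P (b - a))\<^sup>*\<^sup>* 0 (- unitv k)"
    using A unfolding hypA_def by blast
  have "phi 0 \<le> phi (- unitv k)"
    using reach
  proof (induction rule: rtranclp_induct)
    case base then show ?case by simp
  next
    case (step y z)
    then show ?case using lin[of z y] step(2)[THEN \<open>\<And>v. 0 < qrate lam mu P v \<Longrightarrow> 0 \<le> phi v\<close>]
      by linarith
  qed
  moreover have "phi (- unitv k) = -1" unfolding phi_def using kS by (simp add: unitv_nth sum_negf sum.delta)
  moreover have "phi 0 = 0" unfolding phi_def by simp
  ultimately show False by simp
qed

definition esc :: "real^'d^'d \<Rightarrow> 'd::finite \<Rightarrow> real" where
  "esc P k = 1 - (\<Sum>j\<in>UNIV. P$k$j * hitQ P j k)"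

lemma esc_pos:
  fixes lam mu :: "real^'d::finite" and P :: "real^'d^'d"
  assumes JP: "jackson_params lam mu P" and A: "hypA lam mu P"
  shows "0 < esc P k"
proof (rule ccontr)
  assume neg: "\<not> 0 < esc P k"
  define S where "S = {i. hitQ P i k = 1}"
  have iden: "exitp P i + (\<Sum>j\<in>UNIV. P$i$j * (1 - hitQ P j k)) = 1 - (\<Sum>j\<in>UNIV. P$i$j * hitQ P j k)" for i
    by (simp add: exitp_def algebra_simps sum_subtractf)
  have cl: "\<forall>i\<in>S. exitp P i = 0 \<and> (\<forall>j. 0 < P$i$j \<longrightarrow> j \<in> S)"
  proof
    fix i assume iS: "i \<in> S"
    have le: "exitp P i + (\<Sum>j\<in>UNIV. P$i$j * (1 - hitQ P j k)) \<le> 0"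
    proof (cases "i = k")
      case True then show ?thesis using neg iden[of i] by (simp add: esc_def)
    next
      case False
      then show ?thesis using iden[of i] hitQ_rec[OF JP False] iS by (simp add: S_def)
    qed
    have t: "0 \<le> P$i$j * (1 - hitQ P j k)" for j
      using JP hitQ_le1[OF JP, of j k] by (intro mult_nonneg_nonneg) (auto simp: jackson_params_def)
    have e0: "0 \<le> exitp P i" using exitp_nonneg[OF JP] .
    have s0: "0 \<le> (\<Sum>j\<in>UNIV. P$i$j * (1 - hitQ P j k))" using t by (simp add: sum_nonneg)
    have ex: "exitp P i = 0" using le e0 s0 by linarith
    have "(\<Sum>j\<in>UNIV. P$i$j * (1 - hitQ P j k)) = 0" using le e0 s0 by linarith
    then have z: "\<forall>j. P$i$j * (1 - hitQ P j k) = 0" using t by (simp add: sum_nonneg_eq_0_iff)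
    have "0 < P$i$j \<longrightarrow> j \<in> S" for j
    proof
      assume "0 < P$i$j"
      then have "P$i$j \<noteq> 0" by simp
      with z[rule_format, of j] have "1 - hitQ P j k = 0" by simp
      then show "j \<in> S" by (simp add: S_def)
    qed
    then show "exitp P i = 0 \<and> (\<forall>j. 0 < P$i$j \<longrightarrow> j \<in> S)" using ex by blast
  qed
  have "k \<in> S" using hitQ_diag[OF JP] by (simp add: S_def)
  from no_trap[OF JP A this cl] show False .
qed

definition Bm :: "real^'d^'d \<Rightarrow> real^'d^'d::finite" where
  "Bm P = (\<chi> i k. hitQ P i k / esc P k)"

lemma Bm_right:
  fixes lam mu :: "real^'d::finite" and P :: "real^'d^'d"
  assumes JP: "jackson_params lam mu P" and A: "hypA lam mu P"
  shows "Bm P $ i $ m - (\<Sum>j\<in>UNIV. P$i$j * Bm P $ j $ m) = (if i = m then 1 else 0)"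
proof -
  have e: "esc P m \<noteq> 0" using esc_pos[OF JP A, of m] by simp
  have "Bm P $ i $ m - (\<Sum>j\<in>UNIV. P$i$j * Bm P $ j $ m)
      = (hitQ P i m - (\<Sum>j\<in>UNIV. P$i$j * hitQ P j m)) / esc P m"
    by (simp add: Bm_def sum_divide_distrib diff_divide_distrib)
  also have "\<dots> = (if i = m then 1 else 0)"
    using hitQ_rec[OF JP, of i m] hitQ_diag[OF JP, of m] e by (auto simp: esc_def)
  finally show ?thesis .
qed

lemma Bm_inv:
  fixes lam mu :: "real^'d::finite" and P :: "real^'d^'d"
  assumes JP: "jackson_params lam mu P" and A: "hypA lam mu P"
  shows "(mat 1 - P) ** Bm P = mat 1"
proof -
  have "((mat 1 - P) ** Bm P) $ i $ m = mat 1 $ i $ m" for i m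
  proof -
    have "((mat 1 - P) ** Bm P) $ i $ m = (\<Sum>j\<in>UNIV. ((if i = j then 1 else 0) - P$i$j) * Bm P $ j $ m)"
      by (simp add: matrix_matrix_mult_def mat_def)
    also have "\<dots> = Bm P $ i $ m - (\<Sum>j\<in>UNIV. P$i$j * Bm P $ j $ m)"
      by (simp add: left_diff_distrib sum_subtractf if_distrib[of "\<lambda>x. x * _"] sum.delta cong: if_cong)
    also have "\<dots> = mat 1 $ i $ m" using Bm_right[OF JP A] by (simp add: mat_def)
    finally show ?thesis .
  qed
  then show ?thesis by (simp add: vec_eq_iff)
qed

lemma Gmat_eq:
  fixes lam mu :: "real^'d::finite" and P :: "real^'d^'d"
  assumes JP: "jackson_params lam mu P" and A: "hypA lam mu P"
  shows "Gmat P = Bm P"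
proof -
  have r: "(mat 1 - P) ** Bm P = mat 1" by (rule Bm_inv[OF JP A])
  have l: "Bm P ** (mat 1 - P) = mat 1" using r matrix_left_right_inverse by blast
  show ?thesis unfolding Gmat_def matrix_inv_def
  proof (rule some_equality)
    show "(mat 1 - P) ** Bm P = mat 1 \<and> Bm P ** (mat 1 - P) = mat 1" using r l by blast
  next
    fix X assume X: "(mat 1 - P) ** X = mat 1 \<and> X ** (mat 1 - P) = mat 1"
    have "X = X ** ((mat 1 - P) ** Bm P)" using r by (simp add: matrix_mul_rid)
    also have "\<dots> = (X ** (mat 1 - P)) ** Bm P" by (simp add: matrix_mul_assoc)
    also have "\<dots> = Bm P" using X by (simp add: matrix_mul_lid)
    finally show "X = Bm P" .
  qed
qed

lemma Gmat_diag:
  fixes lam mu :: "real^'d::finite" and P :: "real^'d^'d"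
  assumes JP: "jackson_params lam mu P" and A: "hypA lam mu P"
  shows "Gmat P $ k $ k = 1 / esc P k"
  using Gmat_eq[OF JP A] hitQ_diag[OF JP] by (simp add: Bm_def)

lemma Bm_left:
  fixes lam mu :: "real^'d::finite" and P :: "real^'d^'d"
  assumes JP: "jackson_params lam mu P" and A: "hypA lam mu P"
  shows "Bm P $ i $ m - (\<Sum>j\<in>UNIV. Bm P $ i $ j * P$j$m) = (if i = m then 1 else 0)"
proof -
  have l: "Bm P ** (mat 1 - P) = mat 1" using Bm_inv[OF JP A] matrix_left_right_inverse by blast
  have "(Bm P ** (mat 1 - P)) $ i $ m = (\<Sum>j\<in>UNIV. Bm P $ i $ j * ((if j = m then 1 else 0) - P$j$m))"
    by (simp add: matrix_matrix_mult_def mat_def)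
  also have "\<dots> = Bm P $ i $ m - (\<Sum>j\<in>UNIV. Bm P $ i $ j * P$j$m)"
    by (simp add: right_diff_distrib sum_subtractf if_distrib[of "\<lambda>x. _ * x"] sum.delta' cong: if_cong)
  finally show ?thesis using l by (simp add: mat_def)
qed

lemma traffic_eq:
  fixes lam mu :: "real^'d::finite" and P :: "real^'d^'d"
  assumes JP: "jackson_params lam mu P" and A: "hypA lam mu P"
  shows "traffic lam P = (\<chi> m. \<Sum>l\<in>UNIV. lam$l * Bm P $ l $ m)"
  unfolding traffic_def
proof (rule the_equality)
  let ?nu = "(\<chi> m. \<Sum>l\<in>UNIV. lam$l * Bm P $ l $ m) :: real^'d"
  show "\<forall>j. ?nu $ j = lam $ j + (\<Sum>i\<in>UNIV. ?nu $ i * P $ i $ j)"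
  proof
    fix j
    have "(\<Sum>i\<in>UNIV. ?nu $ i * P $ i $ j) = (\<Sum>i\<in>UNIV. \<Sum>l\<in>UNIV. lam$l * (Bm P $ l $ i * P$i$j))"
      by (simp add: sum_distrib_right mult.assoc)
    also have "\<dots> = (\<Sum>l\<in>UNIV. \<Sum>i\<in>UNIV. lam$l * (Bm P $ l $ i * P$i$j))"
      by (rule sum.swap)
    also have "\<dots> = (\<Sum>l\<in>UNIV. lam$l * (\<Sum>i\<in>UNIV. Bm P $ l $ i * P$i$j))"
      by (simp add: sum_distrib_left)
    also have "\<dots> = (\<Sum>l\<in>UNIV. lam$l * (Bm P $ l $ j - (if l = j then 1 else 0)))"
    proof (intro sum.cong refl)
      fix l
      show "lam$l * (\<Sum>i\<in>UNIV. Bm P $ l $ i * P$i$j) = lam$l * (Bm P $ l $ j - (if l = j then 1 else 0))"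
      proof -
        have "(\<Sum>i\<in>UNIV. Bm P $ l $ i * P$i$j) = Bm P $ l $ j - (if l = j then 1 else 0)"
          using Bm_left[OF JP A, of l j] by linarith
        then show ?thesis by simp
      qed
    qed
    also have "\<dots> = ?nu $ j - lam $ j"
      by (simp add: right_diff_distrib sum_subtractf if_distrib[of "\<lambda>x. _ * x"] sum.delta' cong: if_cong)
    finally show "?nu $ j = lam $ j + (\<Sum>i\<in>UNIV. ?nu $ i * P $ i $ j)" by simp
  qed
next
  fix nu :: "real^'d" assume H: "\<forall>j. nu $ j = lam $ j + (\<Sum>i\<in>UNIV. nu $ i * P $ i $ j)"
  show "nu = (\<chi> m. \<Sum>l\<in>UNIV. lam$l * Bm P $ l $ m)"
  proof (subst vec_eq_iff, rule allI)
    fix m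
    have "(\<Sum>l\<in>UNIV. lam$l * Bm P $ l $ m) = (\<Sum>l\<in>UNIV. (nu$l - (\<Sum>i\<in>UNIV. nu $ i * P $ i $ l)) * Bm P $ l $ m)"
    proof (intro sum.cong refl)
      fix l
      show "lam$l * Bm P $ l $ m = (nu$l - (\<Sum>i\<in>UNIV. nu $ i * P $ i $ l)) * Bm P $ l $ m"
        using H[rule_format, of l] by simp
    qed
    also have "\<dots> = (\<Sum>l\<in>UNIV. nu$l * Bm P $ l $ m) - (\<Sum>l\<in>UNIV. \<Sum>i\<in>UNIV. nu $ i * (P $ i $ l * Bm P $ l $ m))"
      by (simp add: left_diff_distrib sum_subtractf sum_distrib_right mult.assoc)
    also have "(\<Sum>l\<in>UNIV. \<Sum>i\<in>UNIV. nu $ i * (P $ i $ l * Bm P $ l $ m)) = (\<Sum>i\<in>UNIV. \<Sum>l\<in>UNIV. nu $ i * (P $ i $ l * Bm P $ l $ m))"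
      by (rule sum.swap)
    also have "(\<Sum>l\<in>UNIV. nu$l * Bm P $ l $ m) - (\<Sum>i\<in>UNIV. \<Sum>l\<in>UNIV. nu $ i * (P $ i $ l * Bm P $ l $ m))
       = (\<Sum>i\<in>UNIV. nu$i * (Bm P $ i $ m - (\<Sum>l\<in>UNIV. P$i$l * Bm P $ l $ m)))"
      by (simp add: right_diff_distrib sum_subtractf sum_distrib_left)
    also have "\<dots> = (\<Sum>i\<in>UNIV. nu$i * (if i = m then 1 else 0))"
      using Bm_right[OF JP A] by simp
    also have "\<dots> = nu $ m" by (simp add: if_distrib[of "\<lambda>x. _ * x"] sum.delta' cong: if_cong)
    finally show "nu $ m = (\<chi> m. \<Sum>l\<in>UNIV. lam$l * Bm P $ l $ m) $ m" by simp
  qed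
qed

lemma traffic_esc:
  fixes lam mu :: "real^'d::finite" and P :: "real^'d^'d"
  assumes JP: "jackson_params lam mu P" and A: "hypA lam mu P"
  shows "traffic lam P $ k * esc P k = (\<Sum>i\<in>UNIV. lam$i * hitQ P i k)"
  using esc_pos[OF JP A, of k] unfolding traffic_eq[OF JP A]
  by (simp add: Bm_def sum_distrib_right)

lemma mult_if0: "(if c then a else 0) * (b::real) = (if c then a * b else 0)" by simp

lemma sum_single:
  fixes g :: "int^'d::finite \<Rightarrow> real"
  assumes "finite U"
  shows "(\<Sum>z\<in>U. if z - y = v then g z else 0) = (if y + v \<in> U then g (y + v) else 0)"
proof -
  have "(\<Sum>z\<in>U. if z - y = v then g z else 0) = (\<Sum>z\<in>U. if y + v = z then g z else 0)"
    by (intro sum.cong refl) (auto simp: algebra_simps)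
  also have "\<dots> = (if y + v \<in> U then g (y + v) else 0)" using assms by (simp add: sum.delta)
  finally show ?thesis .
qed

definition Jset :: "(int^'d::finite) set" where
  "Jset = range unitv \<union> range (\<lambda>i. - unitv i) \<union> (\<lambda>(i,j). unitv j - unitv i) ` UNIV"

lemma finite_Jset: "finite (Jset :: (int^'d::finite) set)"
  unfolding Jset_def by auto

lemma qrate_zero:
  assumes "v \<notin> Jset" shows "qrate lam mu P v = 0"
proof -
  have a: "\<And>i. v \<noteq> unitv i" and b: "\<And>i. v \<noteq> - unitv i" using assms by (auto simp: Jset_def)
  have c: "\<And>i j. v \<noteq> unitv j - unitv i"
  proof
    fix i j assume "v = unitv j - unitv i"
    then have "v \<in> (\<lambda>(i,j). unitv j - unitv i) ` UNIV" by (intro rev_image_eqI[of "(i,j)"]) auto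
    then show False using assms by (simp add: Jset_def)
  qed
  show ?thesis unfolding qrate_def using a b c by simp
qed

lemma gen_formula:
  fixes lam mu :: "real^'d::finite" and P :: "real^'d^'d"
  assumes y: "y \<in> posorth"
  shows "gen lam mu P f y =
      (\<Sum>i\<in>UNIV. if y + unitv i \<in> posorth then lam $ i * (f (y + unitv i) - f y) else 0)
    + (\<Sum>i\<in>UNIV. if y + - unitv i \<in> posorth then mu $ i * exitp P i * (f (y + - unitv i) - f y) else 0)
    + (\<Sum>i\<in>UNIV. \<Sum>j\<in>UNIV. if y + (unitv j - unitv i) \<in> posorth
          then mu $ i * P $ i $ j * (f (y + (unitv j - unitv i)) - f y) else 0)"
    (is "_ = ?rhs")
proof -
  define U where "U = (\<lambda>v. y + v) ` Jset \<inter> posorth"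
  have fU: "finite U" unfolding U_def using finite_Jset by auto
  have memU: "y + v \<in> U \<longleftrightarrow> y + v \<in> posorth" if "v \<in> Jset" for v
    using that unfolding U_def by auto
  have "gen lam mu P f y = infsum (\<lambda>z. qrate lam mu P (z - y) * (f z - f y)) U"
    unfolding gen_def
  proof (rule infsum_cong_neutral)
    fix z assume "z \<in> posorth - U"
    then have "z - y \<notin> Jset" unfolding U_def by (auto simp: image_iff)
    then show "qrate lam mu P (z - y) * (f z - f y) = 0" by (simp add: qrate_zero)
  qed (auto simp: U_def)
  also have "\<dots> = (\<Sum>z\<in>U. qrate lam mu P (z - y) * (f z - f y))" using fU by simp
  also have "\<dots> = (\<Sum>z\<in>U.
        (\<Sum>i\<in>UNIV. if z - y = unitv i then lam $ i * (f z - f y) else 0)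
      + (\<Sum>i\<in>UNIV. if z - y = - unitv i then mu $ i * exitp P i * (f z - f y) else 0)
      + (\<Sum>i\<in>UNIV. \<Sum>j\<in>UNIV. if z - y = unitv j - unitv i then mu $ i * P $ i $ j * (f z - f y) else 0))"
    unfolding qrate_def by (intro sum.cong refl) (simp add: distrib_right sum_distrib_right mult_if0)
  also have "\<dots> = (\<Sum>i\<in>UNIV. \<Sum>z\<in>U. if z - y = unitv i then lam $ i * (f z - f y) else 0)
      + (\<Sum>i\<in>UNIV. \<Sum>z\<in>U. if z - y = - unitv i then mu $ i * exitp P i * (f z - f y) else 0)
      + (\<Sum>i\<in>UNIV. \<Sum>j\<in>UNIV. \<Sum>z\<in>U. if z - y = unitv j - unitv i then mu $ i * P $ i $ j * (f z - f y) else 0)"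
  proof -
    have s1: "(\<Sum>z\<in>U. \<Sum>i\<in>UNIV. if z - y = unitv i then lam $ i * (f z - f y) else 0)
        = (\<Sum>i\<in>UNIV. \<Sum>z\<in>U. if z - y = unitv i then lam $ i * (f z - f y) else 0)"
      by (rule sum.swap)
    have s2: "(\<Sum>z\<in>U. \<Sum>i\<in>UNIV. if z - y = - unitv i then mu $ i * exitp P i * (f z - f y) else 0)
        = (\<Sum>i\<in>UNIV. \<Sum>z\<in>U. if z - y = - unitv i then mu $ i * exitp P i * (f z - f y) else 0)"
      by (rule sum.swap)
    have s3: "(\<Sum>z\<in>U. \<Sum>i\<in>UNIV. \<Sum>j\<in>UNIV. if z - y = unitv j - unitv i then mu $ i * P $ i $ j * (f z - f y) else 0)
        = (\<Sum>i\<in>UNIV. \<Sum>j\<in>UNIV. \<Sum>z\<in>U. if z - y = unitv j - unitv i then mu $ i * P $ i $ j * (f z - f y) else 0)"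
      by (subst sum.swap) (intro sum.cong refl sum.swap)
    show ?thesis by (simp only: sum.distrib s1 s2 s3)
  qed
  also have "\<dots> = ?rhs"
  proof -
    have m1: "y + unitv i \<in> U \<longleftrightarrow> y + unitv i \<in> posorth" for i by (rule memU) (simp add: Jset_def)
    have m2: "y + - unitv i \<in> U \<longleftrightarrow> y + - unitv i \<in> posorth" for i by (rule memU) (simp add: Jset_def)
    have m3: "y + (unitv j - unitv i) \<in> U \<longleftrightarrow> y + (unitv j - unitv i) \<in> posorth" for i j
      by (rule memU) (unfold Jset_def, intro UnI2 rev_image_eqI[of "(i,j)"], auto)
    show ?thesis by (simp only: sum_single[OF fU] m1 m2 m3)
  qed
  finally show ?thesis .
qed

definition dotx :: "real^'d \<Rightarrow> int^'d::finite \<Rightarrow> real" where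
  "dotx a x = (\<Sum>j\<in>UNIV. a$j * real_of_int (x$j))"

lemma dotx_add: "dotx a (x + w) = dotx a x + dotx a w"
  by (simp add: dotx_def distrib_left sum.distrib)

lemma dotx_unitv: "dotx a (unitv i) = a $ i"
proof -
  have "(\<Sum>j\<in>UNIV. a $ j * (if j = i then 1 else 0)) = (\<Sum>j\<in>UNIV. if j = i then a $ j else 0)"
    by (intro sum.cong) auto
  then show ?thesis by (simp add: dotx_def unitv_nth if_distrib[of real_of_int] cong: if_cong)
qed

lemma dotx_neg: "dotx a (- w) = - dotx a w"
  by (simp add: dotx_def sum_negf)

lemma dotx_diff: "dotx a (w - v) = dotx a w - dotx a v"
  by (simp add: dotx_def right_diff_distrib sum_subtractf)

lemma hfun_dotx: "hfun P gamma x = (\<Sum>k\<in>UNIV. exp (dotx (gvec P gamma k) x))"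
  by (simp add: hfun_def dotx_def)

lemma hfun_diff:
  "hfun P gamma (y + w) - hfun P gamma y
     = (\<Sum>k\<in>UNIV. exp (dotx (gvec P gamma k) y) * (exp (dotx (gvec P gamma k) w) - 1))"
  by (simp add: hfun_dotx dotx_add exp_add sum_subtractf right_diff_distrib)

lemma posorth_plus_unitv: "y \<in> posorth \<Longrightarrow> y + unitv i \<in> posorth"
  by (simp add: posorth_def unitv_nth)

lemma posorth_minus_unitv: "y \<in> posorth \<Longrightarrow> (y + - unitv i \<in> posorth) = (0 < y $ i)"
  by (auto simp: posorth_def unitv_nth)

lemma posorth_move: "y \<in> posorth \<Longrightarrow> (y + (unitv j - unitv i) \<in> posorth) = (i = j \<or> 0 < y $ i)"
  by (auto simp: posorth_def unitv_nth)

lemma row_identity: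
  fixes P :: "real^'d^'d::finite" and g m e sP sPQ q :: real
  assumes b: "0 < 1 + q * g" and e: "e = 1 - sP"
  shows "m * e * (1 / (1 + q * g) - 1) + (m * (sP + g * sPQ) / (1 + q * g) - m * sP)
         = m * g / (1 + q * g) * (sPQ - q)"
proof -
  define B where "B = 1 + q * g"
  have nz: "B \<noteq> 0" using b by (simp add: B_def)
  have "m * e * (1 / B - 1) + (m * (sP + g * sPQ) / B - m * sP)
       = (m * e * (1 - B) + m * (sP + g * sPQ) - m * sP * B) / B"
    using nz by (simp add: field_simps)
  also have "m * e * (1 - B) + m * (sP + g * sPQ) - m * sP * B = m * g * (sPQ - q)"
    unfolding e B_def by (simp add: algebra_simps)
  finally show ?thesis unfolding B_def[symmetric] by simp
qed

definition Lc :: "real^'d \<Rightarrow> real^'d^'d \<Rightarrow> real^'d \<Rightarrow> 'd::finite \<Rightarrow> real" where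
  "Lc lam P gamma k = gamma $ k * (\<Sum>i\<in>UNIV. lam $ i * hitQ P i k)"

definition Dc :: "real^'d \<Rightarrow> real^'d^'d \<Rightarrow> real^'d \<Rightarrow> 'd::finite \<Rightarrow> real" where
  "Dc mu P gamma k = gamma $ k * mu $ k * esc P k / (1 + gamma $ k)"

lemma inner_terms:
  fixes lam mu :: "real^'d::finite" and P :: "real^'d^'d"
  assumes JP: "jackson_params lam mu P" and g: "0 \<le> gamma $ k"
  defines "b \<equiv> \<lambda>i. 1 + hitQ P i k * gamma $ k"
  shows "(if 0 < y $ i then mu $ i * exitp P i * (1 / b i - 1) else 0)
       + (\<Sum>j\<in>UNIV. if i = j \<or> 0 < y $ i then mu $ i * P $ i $ j * (b j / b i - 1) else 0)
       = (if 0 < y $ i \<and> i = k then - Dc mu P gamma k else 0)"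
proof -
  have bpos: "0 < b j" for j unfolding b_def
    by (intro add_pos_nonneg mult_nonneg_nonneg hitQ_nonneg[OF JP] g) simp
  show ?thesis
  proof (cases "0 < y $ i")
    case False
    have "(\<Sum>j\<in>UNIV. if i = j \<or> 0 < y $ i then mu $ i * P $ i $ j * (b j / b i - 1) else 0)
        = (\<Sum>j\<in>UNIV. if i = j then mu $ i * P $ i $ j * (b j / b i - 1) else 0)"
      using False by (intro sum.cong) auto
    also have "\<dots> = 0" using JP bpos[of i] by (simp add: jackson_params_def)
    finally show ?thesis using False by simp
  next
    case True
    let ?sP = "\<Sum>j\<in>UNIV. P $ i $ j" and ?sPQ = "\<Sum>j\<in>UNIV. P $ i $ j * hitQ P j k"
    have bi: "b i \<noteq> 0" using bpos[of i] by simp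
    have "(\<Sum>j\<in>UNIV. if i = j \<or> 0 < y $ i then mu $ i * P $ i $ j * (b j / b i - 1) else 0)
        = (\<Sum>j\<in>UNIV. (mu $ i / b i) * (P $ i $ j * b j) - mu $ i * P $ i $ j)"
      using True bi by (intro sum.cong refl) (simp add: field_simps)
    also have "\<dots> = (mu $ i / b i) * (\<Sum>j\<in>UNIV. P $ i $ j * b j) - mu $ i * ?sP"
      by (simp add: sum_subtractf sum_distrib_left)
    also have "(\<Sum>j\<in>UNIV. P $ i $ j * b j) = ?sP + gamma $ k * ?sPQ"
      unfolding b_def by (simp add: distrib_left sum.distrib sum_distrib_left mult_ac)
    finally have s3: "(\<Sum>j\<in>UNIV. if i = j \<or> 0 < y $ i then mu $ i * P $ i $ j * (b j / b i - 1) else 0)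
        = mu $ i * (?sP + gamma $ k * ?sPQ) / b i - mu $ i * ?sP" by simp
    have main: "mu $ i * exitp P i * (1 / b i - 1) + (mu $ i * (?sP + gamma $ k * ?sPQ) / b i - mu $ i * ?sP)
        = mu $ i * gamma $ k / b i * (?sPQ - hitQ P i k)"
      unfolding b_def by (rule row_identity) (use bpos[of i] in \<open>simp_all add: b_def exitp_def\<close>)
    show ?thesis
    proof (cases "i = k")
      case True
      have l: "(if 0 < y $ i then mu $ i * exitp P i * (1 / b i - 1) else 0)
       + (\<Sum>j\<in>UNIV. if i = j \<or> 0 < y $ i then mu $ i * P $ i $ j * (b j / b i - 1) else 0)
        = mu $ i * gamma $ k / b i * (?sPQ - hitQ P i k)" using main s3 \<open>0 < y $ i\<close> by simp
      have r: "mu $ k * gamma $ k / (1 + gamma $ k) * (sq - 1) = - (gamma $ k * mu $ k * (1 - sq) / (1 + gamma $ k))"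
        for sq :: real by (simp add: algebra_simps diff_divide_distrib)
      show ?thesis unfolding l using True \<open>0 < y $ i\<close> hitQ_diag[OF JP, of k] r
        by (simp add: Dc_def esc_def b_def)
    next
      case False
      then show ?thesis using main s3 \<open>0 < y $ i\<close> hitQ_rec[OF JP False] by simp
    qed
  qed
qed

lemma exp_gvec:
  assumes JP: "jackson_params lam mu P" and g: "0 \<le> gamma $ k"
  shows "exp (gvec P gamma k $ i) = 1 + hitQ P i k * gamma $ k"
proof -
  have "0 < 1 + hitQ P i k * gamma $ k"
    by (intro add_pos_nonneg mult_nonneg_nonneg hitQ_nonneg[OF JP] g) simp
  then show ?thesis by (simp add: gvec_def)
qed

lemma gen_hfun:
  fixes lam mu :: "real^'d::finite" and P :: "real^'d^'d"
  assumes JP: "jackson_params lam mu P" and A: "hypA lam mu P" and g: "\<forall>k. 0 \<le> gamma $ k"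
    and y: "y \<in> posorth"
  shows "gen lam mu P (hfun P gamma) y
     = (\<Sum>k\<in>UNIV. exp (dotx (gvec P gamma k) y) * (Lc lam P gamma k - (if 0 < y $ k then Dc mu P gamma k else 0)))"
proof -
  define E where "E = (\<lambda>k. exp (dotx (gvec P gamma k) y))"
  define b where "b = (\<lambda>k i. 1 + hitQ P i k * gamma $ k)"
  define t1 where "t1 = (\<lambda>k i. lam $ i * (b k i - 1))"
  define t2 where "t2 = (\<lambda>k i. if 0 < y $ i then mu $ i * exitp P i * (1 / b k i - 1) else 0)"
  define t3 where "t3 = (\<lambda>k i j. if i = j \<or> 0 < y $ i then mu $ i * P $ i $ j * (b k j / b k i - 1) else 0)"
  have eb: "exp (gvec P gamma k $ i) = b k i" for k i unfolding b_def using exp_gvec[OF JP] g by blast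
  have bpos: "0 < b k i" for k i unfolding eb[symmetric] by simp
  let ?h = "hfun P gamma"
  have T1: "(if y + unitv i \<in> posorth then lam $ i * (?h (y + unitv i) - ?h y) else 0) = (\<Sum>k\<in>UNIV. E k * t1 k i)" for i
    using y by (simp add: posorth_plus_unitv hfun_diff dotx_unitv eb sum_distrib_left E_def t1_def mult_ac)
  have T2: "(if y + - unitv i \<in> posorth then mu $ i * exitp P i * (?h (y + - unitv i) - ?h y) else 0)
      = (\<Sum>k\<in>UNIV. E k * t2 k i)" for i
    unfolding posorth_minus_unitv[OF y] hfun_diff by (simp add: dotx_neg dotx_unitv exp_minus eb sum_distrib_left
        E_def t2_def mult_ac inverse_eq_divide)
  have T3: "(if y + (unitv j - unitv i) \<in> posorth then mu $ i * P $ i $ j * (?h (y + (unitv j - unitv i)) - ?h y) else 0)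
      = (\<Sum>k\<in>UNIV. E k * t3 k i j)" for i j
    using y by (simp add: posorth_move hfun_diff dotx_diff dotx_unitv exp_diff eb sum_distrib_left
        E_def t3_def mult_ac)
  have "gen lam mu P ?h y = (\<Sum>i\<in>UNIV. \<Sum>k\<in>UNIV. E k * t1 k i) + (\<Sum>i\<in>UNIV. \<Sum>k\<in>UNIV. E k * t2 k i)
      + (\<Sum>i\<in>UNIV. \<Sum>j\<in>UNIV. \<Sum>k\<in>UNIV. E k * t3 k i j)"
    unfolding gen_formula[OF y] T1 T2 T3 ..
  also have "\<dots> = (\<Sum>k\<in>UNIV. E k * ((\<Sum>i\<in>UNIV. t1 k i) + (\<Sum>i\<in>UNIV. t2 k i + (\<Sum>j\<in>UNIV. t3 k i j))))"
  proof -
    have a: "(\<Sum>i\<in>UNIV. \<Sum>k\<in>UNIV. E k * t1 k i) = (\<Sum>k\<in>UNIV. E k * (\<Sum>i\<in>UNIV. t1 k i))"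
      by (subst sum.swap) (simp add: sum_distrib_left)
    have b2: "(\<Sum>i\<in>UNIV. \<Sum>k\<in>UNIV. E k * t2 k i) = (\<Sum>k\<in>UNIV. E k * (\<Sum>i\<in>UNIV. t2 k i))"
      by (subst sum.swap) (simp add: sum_distrib_left)
    have c: "(\<Sum>i\<in>UNIV. \<Sum>j\<in>UNIV. \<Sum>k\<in>UNIV. E k * t3 k i j) = (\<Sum>k\<in>UNIV. E k * (\<Sum>i\<in>UNIV. \<Sum>j\<in>UNIV. t3 k i j))"
    proof -
      have "(\<Sum>i\<in>UNIV. \<Sum>j\<in>UNIV. \<Sum>k\<in>UNIV. E k * t3 k i j) = (\<Sum>i\<in>UNIV. \<Sum>k\<in>UNIV. \<Sum>j\<in>UNIV. E k * t3 k i j)"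
        by (intro sum.cong refl sum.swap)
      also have "\<dots> = (\<Sum>k\<in>UNIV. \<Sum>i\<in>UNIV. \<Sum>j\<in>UNIV. E k * t3 k i j)" by (rule sum.swap)
      finally show ?thesis by (simp add: sum_distrib_left)
    qed
    show ?thesis unfolding a b2 c by (simp add: distrib_left sum.distrib)
  qed
  also have "\<dots> = (\<Sum>k\<in>UNIV. E k * (Lc lam P gamma k - (if 0 < y $ k then Dc mu P gamma k else 0)))"
  proof (intro sum.cong refl arg_cong2[where f="(*)"])
    fix k
    have s1: "(\<Sum>i\<in>UNIV. t1 k i) = Lc lam P gamma k"
      by (simp add: t1_def b_def Lc_def sum_distrib_left mult_ac)
    have s2: "t2 k i + (\<Sum>j\<in>UNIV. t3 k i j) = (if 0 < y $ i \<and> i = k then - Dc mu P gamma k else 0)" for i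
      unfolding t2_def t3_def b_def by (rule inner_terms[OF JP g[rule_format]])
    show "(\<Sum>i\<in>UNIV. t1 k i) + (\<Sum>i\<in>UNIV. t2 k i + (\<Sum>j\<in>UNIV. t3 k i j))
        = Lc lam P gamma k - (if 0 < y $ k then Dc mu P gamma k else 0)"
    proof -
      have "(\<Sum>i\<in>UNIV. if 0 < y $ i \<and> i = k then - Dc mu P gamma k else 0)
          = (\<Sum>i\<in>UNIV. if i = k then (if 0 < y $ k then - Dc mu P gamma k else 0) else 0)"
        by (intro sum.cong) auto
      then show ?thesis unfolding s1 s2 by simp
    qed
  qed
  finally show ?thesis unfolding E_def .
qed

definition xr :: "int^'d::finite \<Rightarrow> real^'d" where
  "xr x = (\<chi> j. real_of_int (x $ j))"

definition nx :: "int^'d::finite \<Rightarrow> real" where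
  "nx x = (\<Sum>i\<in>UNIV. real_of_int (x $ i))"

lemma dotx_inner: "dotx a x = a \<bullet> xr x"
  by (simp add: dotx_def inner_vec_def xr_def)

lemma weight_decay:
  fixes P :: "real^'d^'d::finite" and gamma :: "real^'d"
  assumes G: "gamma \<in> GammaSet P"
  shows "\<exists>\<eta>>0. \<forall>x\<in>posorth. x $ k = 0 \<longrightarrow>
            (\<exists>m. \<eta> * nx x \<le> dotx (gvec P gamma m) x - dotx (gvec P gamma k) x)"
proof -
  define a where "a = gvec P gamma"
  define K where "K = {v::real^'d. (\<forall>i. 0 \<le> v $ i) \<and> v $ k = 0 \<and> (\<Sum>i\<in>UNIV. v $ i) = 1}"
  have nx_nonneg: "0 \<le> nx x" if "x \<in> posorth" for x
    using that by (auto simp: nx_def posorth_def intro!: sum_nonneg)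
  have inK: "(1 / nx x) *\<^sub>R xr x \<in> K" if "x \<in> posorth" "x $ k = 0" "nx x \<noteq> 0" for x
    using that nx_nonneg[OF that(1)] by (auto simp: K_def xr_def posorth_def nx_def sum_divide_distrib[symmetric])
  have scale: "dotx (a m) x - dotx (a k) x = nx x * ((a m - a k) \<bullet> ((1 / nx x) *\<^sub>R xr x))"
    if "nx x \<noteq> 0" for x m
    using that by (simp add: dotx_inner inner_diff_left)
  show ?thesis
  proof (cases "K = {}")
    case True
    show ?thesis
    proof (intro exI[of _ 1] conjI ballI impI)
      fix x :: "int^'d" assume x: "x \<in> posorth" "x $ k = 0"
      then have "nx x = 0" using inK True by blast
      then show "\<exists>m. 1 * nx x \<le> dotx (gvec P gamma m) x - dotx (gvec P gamma k) x" by auto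
    qed simp
  next
    case False
    define g where "g = (\<lambda>v. \<Sum>m\<in>UNIV. max 0 ((a m - a k) \<bullet> v))"
    have clo: "closed K" unfolding K_def
      by (intro closed_Collect_conj closed_Collect_all closed_Collect_le closed_Collect_eq continuous_intros)
    have bnd: "bounded K"
    proof -
      have "norm v \<le> 1" if "v \<in> K" for v
        using norm_le_l1_cart[of v] that by (simp add: K_def)
      then show ?thesis unfolding bounded_iff by blast
    qed
    have "compact K" using clo bnd by (simp add: compact_eq_bounded_closed)
    moreover have "continuous_on K g" unfolding g_def by (intro continuous_intros)
    ultimately obtain v0 where v0: "v0 \<in> K" and v0min: "\<And>v. v \<in> K \<Longrightarrow> g v0 \<le> g v"
      using continuous_attains_inf[OF _ False] by blast
    have "v0 \<noteq> 0" using v0 by (auto simp: K_def)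
    then have lt: "a k \<bullet> v0 < (MAX j\<in>UNIV. a j \<bullet> v0)"
      using G v0 unfolding GammaSet_def K_def a_def by blast
    obtain j where j: "(MAX j\<in>UNIV. a j \<bullet> v0) = a j \<bullet> v0"
    proof -
      have "(MAX j\<in>UNIV. a j \<bullet> v0) \<in> (\<lambda>j. a j \<bullet> v0) ` UNIV" by (rule Max_in) auto
      then obtain j0 where "(MAX j\<in>UNIV. a j \<bullet> v0) = a j0 \<bullet> v0" by blast
      then show ?thesis using that by blast
    qed
    have "0 < max 0 ((a j - a k) \<bullet> v0)" using lt j by (simp add: inner_diff_left)
    also have "\<dots> \<le> g v0" unfolding g_def by (rule member_le_sum) auto
    finally have g0: "0 < g v0" .
    define c where "c = g v0 / real CARD('d)"
    have c: "0 < c" using g0 by (simp add: c_def)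
    show ?thesis
    proof (intro exI[of _ c] conjI ballI impI c)
      fix x :: "int^'d" assume x: "x \<in> posorth" "x $ k = 0"
      show "\<exists>m. c * nx x \<le> dotx (gvec P gamma m) x - dotx (gvec P gamma k) x"
      proof (cases "nx x = 0")
        case True then show ?thesis by auto
      next
        case False
        define v where "v = (1 / nx x) *\<^sub>R xr x"
        have vK: "v \<in> K" using inK[OF x False] by (simp add: v_def)
        have "\<exists>m. c \<le> max 0 ((a m - a k) \<bullet> v)"
        proof (rule ccontr)
          assume "\<not> ?thesis"
          then have "\<And>m. max 0 ((a m - a k) \<bullet> v) < c" by (simp add: not_le)
          then have "g v < (\<Sum>m\<in>(UNIV::'d set). c)" unfolding g_def by (intro sum_strict_mono) auto
          also have "\<dots> = g v0" by (simp add: c_def)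
          finally show False using v0min[OF vK] by simp
        qed
        then obtain m where m: "c \<le> max 0 ((a m - a k) \<bullet> v)" by blast
        then have "c \<le> (a m - a k) \<bullet> v" using c by (simp add: le_max_iff_disj)
        then have "nx x * c \<le> nx x * ((a m - a k) \<bullet> v)"
          using nx_nonneg[OF x(1)] by (intro mult_left_mono)
        then have "c * nx x \<le> dotx (a m) x - dotx (a k) x"
          using scale[OF False, of m] unfolding v_def by (simp only: mult.commute)
        then show ?thesis unfolding a_def by blast
      qed
    qed
  qed
qed

lemma eventually_at_inf_pos:
  "eventually P at_inf_pos \<longleftrightarrow> (\<exists>N. \<forall>x\<in>posorth. N \<le> (\<Sum>i\<in>UNIV. \<bar>x $ i\<bar>) \<longrightarrow> P x)"
  unfolding at_inf_pos_def eventually_inf_principal eventually_filtercomap eventually_at_top_linorder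
  by (auto; blast)

lemma Limsup_frequently:
  fixes f :: "'a \<Rightarrow> ereal"
  assumes "frequently (\<lambda>x. C \<le> f x) F"
  shows "C \<le> Limsup F f"
  unfolding Limsup_def
proof (rule INF_greatest)
  fix Q assume "Q \<in> {P. eventually P F}"
  then have ev: "eventually Q F" by simp
  have "\<exists>x. Q x \<and> C \<le> f x"
  proof (rule ccontr)
    assume "\<not> ?thesis"
    then have "eventually (\<lambda>x. \<not> C \<le> f x) F" using ev by (rule_tac eventually_mono[OF ev]) auto
    then show False using assms by (simp add: frequently_def)
  qed
  then obtain x where "Q x" "C \<le> f x" by blast
  then show "C \<le> (SUP x\<in>Collect Q. f x)" by (intro SUP_upper2[of x]) auto
qed

lemma exp_small:
  fixes eta eps C :: real
  assumes "0 < eta" "0 < eps" "0 \<le> C"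
  shows "\<exists>N. \<forall>t\<ge>N. exp (- (eta * t)) * C \<le> eps"
proof (intro exI allI impI)
  fix t assume t: "C / (eta * eps) \<le> t"
  have "C \<le> eps * (eta * t)" using t assms by (simp add: field_simps)
  also have "\<dots> \<le> eps * exp (eta * t)"
  proof -
    have "eta * t \<le> exp (eta * t)" using exp_ge_add_one_self[of "eta * t"] by linarith
    then show ?thesis using assms by (intro mult_left_mono) auto
  qed
  finally have "C \<le> eps * exp (eta * t)" .
  then show "exp (- (eta * t)) * C \<le> eps" by (simp add: exp_minus field_simps)
qed

theorem theorem2p1:
  fixes lam mu :: "real^'d::finite" and P :: "real^'d^'d" and gamma :: "real^'d"
  assumes "jackson_params lam mu P"
    and "hypA lam mu P"
    and "gamma \<in> GammaSet P"
  shows "Limsup at_inf_pos (\<lambda>x. ereal (gen lam mu P (hfun P gamma) x / hfun P gamma x))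
       = ereal (- (MIN i\<in>UNIV. gamma $ i / Gmat P $ i $ i
                   * (mu $ i / (1 + gamma $ i) - traffic lam P $ i)))"
proof -
  note JP = assms(1) and A = assms(2) and G = assms(3)
  have g: "\<forall>k. 0 \<le> gamma $ k" using G by (simp add: GammaSet_def)
  define E where "E = (\<lambda>k x. exp (dotx (gvec P gamma k) x))"
  define H where "H = hfun P gamma"
  define m where "m = (\<lambda>k. Lc lam P gamma k - Dc mu P gamma k)"
  define M where "M = - (MIN i\<in>UNIV. gamma $ i / Gmat P $ i $ i * (mu $ i / (1 + gamma $ i) - traffic lam P $ i))"
  define R where "R = (\<lambda>x. gen lam mu P (hfun P gamma) x / hfun P gamma x)"
  have Hsum: "H x = (\<Sum>k\<in>UNIV. E k x)" for x by (simp add: H_def E_def hfun_dotx)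
  have Epos: "0 < E k x" for k x by (simp add: E_def)
  have Hpos: "0 < H x" for x unfolding Hsum by (intro sum_pos) (auto simp: Epos)
  have EH: "E k x \<le> H x" for k x unfolding Hsum by (rule member_le_sum) (auto simp: Epos less_imp_le)
  have Dnn: "0 \<le> Dc mu P gamma k" for k
  proof -
    have "0 \<le> gamma $ k" "0 < mu $ k" "0 < esc P k"
      using g esc_pos[OF JP A, of k] JP by (auto simp: jackson_params_def)
    then show ?thesis unfolding Dc_def by (intro divide_nonneg_pos mult_nonneg_nonneg) auto
  qed
  have rhs_i: "gamma $ i / Gmat P $ i $ i * (mu $ i / (1 + gamma $ i) - traffic lam P $ i)
      = Dc mu P gamma i - Lc lam P gamma i" for i
  proof -
    have e: "esc P i \<noteq> 0" using esc_pos[OF JP A, of i] by simp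
    have "gamma $ i / Gmat P $ i $ i * (mu $ i / (1 + gamma $ i) - traffic lam P $ i)
        = gamma $ i * mu $ i * esc P i / (1 + gamma $ i) - gamma $ i * (traffic lam P $ i * esc P i)"
      unfolding Gmat_diag[OF JP A] using e by (simp add: algebra_simps)
    then show ?thesis unfolding traffic_esc[OF JP A] Dc_def Lc_def by simp
  qed
  have Meq: "M = - (MIN i\<in>UNIV. Dc mu P gamma i - Lc lam P gamma i)" unfolding M_def rhs_i ..
  have mleM: "m k \<le> M" for k
  proof -
    have "(MIN i\<in>UNIV. Dc mu P gamma i - Lc lam P gamma i) \<le> Dc mu P gamma k - Lc lam P gamma k"
      by (rule Min_le) auto
    then show ?thesis unfolding Meq m_def by linarith
  qed
  obtain k0 where k0: "m k0 = M"
  proof -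
    have "(MIN i\<in>UNIV. Dc mu P gamma i - Lc lam P gamma i) \<in> (\<lambda>i. Dc mu P gamma i - Lc lam P gamma i) ` UNIV"
      by (rule Min_in) auto
    then obtain i where "(MIN i\<in>UNIV. Dc mu P gamma i - Lc lam P gamma i) = Dc mu P gamma i - Lc lam P gamma i"
      by blast
    then have "m i = M" unfolding Meq m_def by linarith
    then show ?thesis using that by blast
  qed
  have Rform: "R x = (\<Sum>k\<in>UNIV. (E k x / H x) * (m k + (if 0 < x $ k then 0 else Dc mu P gamma k)))"
    if "x \<in> posorth" for x
  proof -
    have "R x = (\<Sum>k\<in>UNIV. E k x * (Lc lam P gamma k - (if 0 < x $ k then Dc mu P gamma k else 0))) / H x"
      unfolding R_def gen_hfun[OF JP A g that] E_def H_def ..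
    also have "\<dots> = (\<Sum>k\<in>UNIV. (E k x / H x) * (m k + (if 0 < x $ k then 0 else Dc mu P gamma k)))"
      unfolding sum_divide_distrib by (intro sum.cong refl) (simp add: m_def)
    finally show ?thesis .
  qed
  have wsum: "(\<Sum>k\<in>UNIV. E k x / H x) = 1" for x
    using Hpos[of x] unfolding sum_divide_distrib[symmetric] Hsum[symmetric] by simp
  have "\<forall>k. \<exists>\<eta>>0. \<forall>x\<in>posorth. x $ k = 0 \<longrightarrow>
            (\<exists>j. \<eta> * nx x \<le> dotx (gvec P gamma j) x - dotx (gvec P gamma k) x)"
    using weight_decay[OF G] by blast
  note wd = this
  obtain ef where efall: "\<forall>k. 0 < ef k \<and> (\<forall>x\<in>posorth. x $ k = 0 \<longrightarrow>
            (\<exists>j. ef k * nx x \<le> dotx (gvec P gamma j) x - dotx (gvec P gamma k) x))"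
    using choice[OF wd] by blast
  have ef: "\<And>k. 0 < ef k" using efall by blast
  have efp: "\<And>k x. x \<in> posorth \<Longrightarrow> x $ k = 0 \<Longrightarrow>
            (\<exists>j. ef k * nx x \<le> dotx (gvec P gamma j) x - dotx (gvec P gamma k) x)"
    using efall by blast
  define eta where "eta = Min (range ef)"
  have eta: "0 < eta" unfolding eta_def using ef by (subst Min_gr_iff) auto
  have etale: "eta \<le> ef k" for k unfolding eta_def by (rule Min_le) auto
  have nxnn: "0 \<le> nx x" if "x \<in> posorth" for x
    using that by (auto simp: nx_def posorth_def intro!: sum_nonneg)
  have wbound: "E k x / H x \<le> exp (- (eta * nx x))" if x: "x \<in> posorth" "x $ k = 0" for k x
  proof -
    obtain j where j: "ef k * nx x \<le> dotx (gvec P gamma j) x - dotx (gvec P gamma k) x"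
      using efp[OF x] by blast
    have "E k x / H x \<le> E k x / E j x"
      using Epos[of k x] Epos[of j x] EH[of j x] by (intro divide_left_mono) auto
    also have "\<dots> = exp (- (dotx (gvec P gamma j) x - dotx (gvec P gamma k) x))"
      by (simp add: E_def exp_diff[symmetric])
    also have "\<dots> \<le> exp (- (eta * nx x))"
    proof -
      have "eta * nx x \<le> ef k * nx x" using etale[of k] nxnn[OF x(1)] by (intro mult_right_mono)
      then show ?thesis using j by simp
    qed
    finally show ?thesis .
  qed
  have nx_norm: "real_of_int (\<Sum>i\<in>UNIV. \<bar>x $ i\<bar>) = nx x" if "x \<in> posorth" for x
    using that by (simp add: nx_def posorth_def)
  have upper: "Limsup at_inf_pos (\<lambda>x. ereal (R x)) \<le> ereal (M + eps)" if eps: "0 < eps" for eps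
  proof (rule Limsup_bounded)
    define SD where "SD = (\<Sum>k\<in>UNIV. Dc mu P gamma k)"
    have SD: "0 \<le> SD" unfolding SD_def using Dnn by (simp add: sum_nonneg)
    obtain N where N: "\<And>t. N \<le> t \<Longrightarrow> exp (- (eta * t)) * SD \<le> eps"
      using exp_small[OF eta eps SD] by blast
    show "eventually (\<lambda>x. ereal (R x) \<le> ereal (M + eps)) at_inf_pos"
      unfolding eventually_at_inf_pos
    proof (intro exI[of _ "\<lceil>N\<rceil>"] ballI impI)
      fix x :: "int^'d" assume x: "x \<in> posorth" and xN: "\<lceil>N\<rceil> \<le> (\<Sum>i\<in>UNIV. \<bar>x $ i\<bar>)"
      have "N \<le> nx x" using xN nx_norm[OF x] by linarith
      then have sm: "exp (- (eta * nx x)) * SD \<le> eps" by (rule N)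
      have "R x = (\<Sum>k\<in>UNIV. (E k x / H x) * m k) + (\<Sum>k\<in>UNIV. (E k x / H x) * (if 0 < x $ k then 0 else Dc mu P gamma k))"
        unfolding Rform[OF x] by (simp add: distrib_left sum.distrib)
      also have "(\<Sum>k\<in>UNIV. (E k x / H x) * m k) \<le> (\<Sum>k\<in>UNIV. (E k x / H x) * M)"
        using Epos Hpos mleM by (intro sum_mono mult_left_mono) (auto intro: less_imp_le)
      also have "(\<Sum>k\<in>UNIV. (E k x / H x) * M) = M" unfolding sum_distrib_right[symmetric] wsum by simp
      also have "(\<Sum>k\<in>UNIV. (E k x / H x) * (if 0 < x $ k then 0 else Dc mu P gamma k))
          \<le> (\<Sum>k\<in>UNIV. exp (- (eta * nx x)) * Dc mu P gamma k)"
      proof (intro sum_mono)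
        fix k
        show "(E k x / H x) * (if 0 < x $ k then 0 else Dc mu P gamma k) \<le> exp (- (eta * nx x)) * Dc mu P gamma k"
        proof (cases "0 < x $ k")
          case True then show ?thesis using Dnn[of k] by simp
        next
          case False
          moreover have "0 \<le> x $ k" using x by (simp add: posorth_def)
          ultimately have "x $ k = 0" by simp
          then have "(E k x / H x) * Dc mu P gamma k \<le> exp (- (eta * nx x)) * Dc mu P gamma k"
            by (rule mult_right_mono[OF wbound[OF x] Dnn])
          then show ?thesis using False by (simp only: if_False)
        qed
      qed
      also have "(\<Sum>k\<in>UNIV. exp (- (eta * nx x)) * Dc mu P gamma k) = exp (- (eta * nx x)) * SD"
        unfolding SD_def by (simp add: sum_distrib_left)
      finally show "ereal (R x) \<le> ereal (M + eps)" using sm by simp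
    qed
  qed
  have lower: "ereal (M - eps) \<le> Limsup at_inf_pos (\<lambda>x. ereal (R x))" if eps: "0 < eps" for eps
  proof (rule Limsup_frequently)
    define SM where "SM = (\<Sum>k\<in>UNIV. M - m k)"
    have SM: "0 \<le> SM" unfolding SM_def using mleM by (simp add: sum_nonneg)
    obtain N where N: "\<And>t. N \<le> t \<Longrightarrow> exp (- (eta * t)) * SM \<le> eps"
      using exp_small[OF eta eps SM] by blast
    define xs where "xs = (\<lambda>n::nat. (\<chi> i. if i = k0 then int n else 0) :: int^'d)"
    have xs_po: "xs n \<in> posorth" for n by (simp add: xs_def posorth_def)
    have xs_nx: "nx (xs n) = real n" for n by (simp add: xs_def nx_def if_distrib[of real_of_int] cong: if_cong)
    have xs_norm: "(\<Sum>i\<in>UNIV. \<bar>xs n $ i\<bar>) = int n" for n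
      using nx_norm[OF xs_po[of n]] xs_nx[of n] by linarith
    have good: "ereal (M - eps) \<le> ereal (R (xs n))" if n: "N \<le> real n" for n
    proof -
      have sm: "exp (- (eta * real n)) * SM \<le> eps" using N[OF n] .
      have "(\<Sum>k\<in>UNIV. (E k (xs n) / H (xs n)) * m k) \<le> R (xs n)"
        unfolding Rform[OF xs_po] using Epos Hpos Dnn
        by (intro sum_mono mult_left_mono) (auto intro: less_imp_le)
      moreover have "(\<Sum>k\<in>UNIV. (E k (xs n) / H (xs n)) * m k)
          = M - (\<Sum>k\<in>UNIV. (E k (xs n) / H (xs n)) * (M - m k))"
      proof -
        have "(\<Sum>k\<in>UNIV. (E k (xs n) / H (xs n)) * M) = M"
          unfolding sum_distrib_right[symmetric] wsum by simp
        then show ?thesis by (simp add: right_diff_distrib sum_subtractf)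
      qed
      moreover have "(\<Sum>k\<in>UNIV. (E k (xs n) / H (xs n)) * (M - m k)) \<le> (\<Sum>k\<in>UNIV. exp (- (eta * real n)) * (M - m k))"
      proof (intro sum_mono)
        fix k
        show "(E k (xs n) / H (xs n)) * (M - m k) \<le> exp (- (eta * real n)) * (M - m k)"
        proof (cases "k = k0")
          case True then show ?thesis using k0 by simp
        next
          case False
          then have "xs n $ k = 0" by (simp add: xs_def)
          have "(E k (xs n) / H (xs n)) * (M - m k) \<le> exp (- (eta * nx (xs n))) * (M - m k)"
            using mleM[of k] by (intro mult_right_mono[OF wbound[OF xs_po]]) (simp_all add: \<open>xs n $ k = 0\<close>)
          then show ?thesis unfolding xs_nx .
        qed
      qed
      moreover have "(\<Sum>k\<in>UNIV. exp (- (eta * real n)) * (M - m k)) = exp (- (eta * real n)) * SM"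
        unfolding SM_def by (simp add: sum_distrib_left)
      ultimately show ?thesis using sm by simp
    qed
    show "frequently (\<lambda>x. ereal (M - eps) \<le> ereal (R x)) at_inf_pos"
      unfolding frequently_def
    proof
      assume "eventually (\<lambda>x. \<not> ereal (M - eps) \<le> ereal (R x)) at_inf_pos"
      then obtain N' where N': "\<And>x. x \<in> posorth \<Longrightarrow> N' \<le> (\<Sum>i\<in>UNIV. \<bar>x $ i\<bar>) \<Longrightarrow> \<not> ereal (M - eps) \<le> ereal (R x)"
        unfolding eventually_at_inf_pos by blast
      define n where "n = max (nat N') (nat \<lceil>N\<rceil>)"
      have "N' \<le> (\<Sum>i\<in>UNIV. \<bar>xs n $ i\<bar>)" unfolding xs_norm n_def by linarith
      moreover have "N \<le> real n" unfolding n_def by linarith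
      ultimately show False using N'[OF xs_po] good by blast
    qed
  qed
  let ?L = "Limsup at_inf_pos (\<lambda>x. ereal (R x))"
  have Lle: "?L \<le> ereal M"
  proof (rule ereal_le_epsilon2)
    fix e :: real assume "0 < e" then show "?L \<le> ereal M + ereal e" using upper by simp
  qed
  have Lge: "ereal (M - e) \<le> ?L" if "0 < e" for e using lower that .
  have "?L = ereal M"
  proof (cases ?L)
    case (real l)
    have "l \<le> M" using Lle real by simp
    moreover have "M - e \<le> l" if "0 < e" for e using Lge[OF that] real by simp
    moreover have "\<not> l < M"
    proof
      assume "l < M"
      then have "M - (M - l) / 2 \<le> l" using Lge[of "(M - l) / 2"] real by simp
      then show False using \<open>l < M\<close> by (simp add: field_simps)
    qed
    ultimately have "l = M" by linarith
    then show ?thesis using real by simp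
  next
    case PInf then show ?thesis using Lle by simp
  next
    case MInf then show ?thesis using Lge[of 1] by simp
  qed
  then show ?thesis unfolding R_def M_def .
qed

end
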